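(* Let $n\ge 2$, $\varepsilon\in(0,1)$, and let $K\in T^n$ satisfy $(1-\varepsilon)D_n\subseteq \operatorname{conv}K\subseteq (1+\varepsilon)D_n$. Then \[ (1-\varepsilon)D_n\subseteq K+2\sqrt{\varepsilon}\,D_n . \]
   Context: $D_n$ denotes the closed Euclidean unit ball in $\mathbb R^n$; $\operatorname{conv}$ denotes convex hull and $+$ the Minkowski sum. A nonempty compact set $K\subset\mathbb R^n$ is called star shaped if $x\in K$ implies that the segment $[0,x]\subseteq K$; $T^n$ denotes the family of star shaped sets in $\mathbb R^n$. *)

theory Defs
  imports "HOL-Analysis.Analysis"
begin

definition star_shaped :: "'a::real_normed_vector set \<Rightarrow> bool" where
  "star_shaped K \<longleftrightarrow> K \<noteq> {} \<and> compact K \<and> (\<forall>x\<in>K. closed_segment 0 x \<subseteq> K)"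

definition minkowski_sum :: "'a::real_vector set \<Rightarrow> 'a set \<Rightarrow> 'a set" where
  "minkowski_sum A B = {a + b | a b. a \<in> A \<and> b \<in> B}"

end

theory Submission
  imports Defs
begin

lemma key_point:
  fixes K :: "'a::euclidean_space set" and \<epsilon> :: real and y :: 'a
  assumes "0 < \<epsilon>" and "\<epsilon> < 1"
    and "star_shaped K"
    and A: "(\<lambda>x. (1 - \<epsilon>) *\<^sub>R x) ` cball 0 1 \<subseteq> convex hull K"
    and B: "convex hull K \<subseteq> (\<lambda>x. (1 + \<epsilon>) *\<^sub>R x) ` cball 0 1"
    and y: "norm y \<le> 1 - \<epsilon>"
  shows "\<exists>p\<in>K. norm (p - y) \<le> 2 * sqrt \<epsilon>"
proof (cases "y = 0")
  case True
  from assms(3) obtain k where k: "k \<in> K" unfolding star_shaped_def by blast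
  then have "0 \<in> K" using assms(3) unfolding star_shaped_def by auto
  then show ?thesis using True assms(1) by (intro bexI[of _ 0]) auto
next
  case False
  define u where "u = y /\<^sub>R norm y"
  have nu: "norm u = 1" using False by (simp add: u_def)
  have "\<exists>k\<in>K. u \<bullet> k \<ge> 1 - \<epsilon>"
  proof (rule ccontr)
    assume "\<not> ?thesis"
    then have "K \<subseteq> {x. u \<bullet> x < 1 - \<epsilon>}" by force
    then have "convex hull K \<subseteq> {x. u \<bullet> x < 1 - \<epsilon>}"
      by (intro hull_minimal) (auto simp: convex_halfspace_lt)
    moreover have "u \<in> cball 0 1" using nu by simp
    then have "(1 - \<epsilon>) *\<^sub>R u \<in> convex hull K"
      using A by blast
    ultimately have "u \<bullet> ((1 - \<epsilon>) *\<^sub>R u) < 1 - \<epsilon>" by blast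
    moreover have "u \<bullet> u = 1" using nu by (simp add: dot_square_norm)
    ultimately show False by simp
  qed
  then obtain k where k: "k \<in> K" and ka: "u \<bullet> k \<ge> 1 - \<epsilon>" by blast
  have "k \<in> convex hull K" using k by (rule hull_inc)
  with B obtain x where x: "norm x \<le> 1" "k = (1 + \<epsilon>) *\<^sub>R x" by auto
  have "norm k = (1 + \<epsilon>) * norm x" using x assms(1) by simp
  also have "\<dots> \<le> (1 + \<epsilon>) * 1" using x(1) assms(1) by (intro mult_left_mono) auto
  finally have nk: "norm k \<le> 1 + \<epsilon>" by simp
  define a where "a = u \<bullet> k"
  have apos: "a > 0" using ka assms(2) a_def by simp
  define t where "t = norm y / a"
  have t0: "0 \<le> t" using apos by (simp add: t_def)
  have t1: "t \<le> 1" using apos y ka by (simp add: t_def a_def)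
  have "t *\<^sub>R k \<in> closed_segment 0 k"
    using t0 t1 by (auto simp: closed_segment_def)
  then have pK: "t *\<^sub>R k \<in> K" using k assms(3) unfolding star_shaped_def by blast
  have ky: "k \<bullet> y = a * norm y"
    using False by (simp add: a_def u_def inner_commute)
  have ta: "t * a = norm y" using apos by (simp add: t_def)
  have "(norm (t *\<^sub>R k - y))^2 = t^2 * (norm k)^2 - 2 * t * (k \<bullet> y) + (norm y)^2"
    unfolding power2_norm_eq_inner
    by (simp add: inner_diff_left inner_diff_right inner_commute power2_eq_square algebra_simps)
  also have "\<dots> = t^2 * ((norm k)^2 - a^2)"
  proof -
    have e1: "t^2 * a^2 = (norm y)^2" using ta by (metis power_mult_distrib)
    have e2: "2 * t * (k \<bullet> y) = 2 * (norm y)^2" using ky ta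
      by (simp add: power2_eq_square mult.assoc[symmetric])
    show ?thesis using e1 e2 by (simp add: right_diff_distrib)
  qed
  also have "\<dots> \<le> 1 * (4 * \<epsilon>)"
  proof (rule mult_mono)
    show "t^2 \<le> 1" using t0 t1 by (simp add: power_le_one)
    have "(norm k)^2 \<le> (1 + \<epsilon>)^2" using nk by (simp add: power_mono)
    moreover have "(1 - \<epsilon>)^2 \<le> a^2" using ka assms(2) a_def by (simp add: power_mono)
    ultimately show "(norm k)^2 - a^2 \<le> 4 * \<epsilon>" by (simp add: power2_eq_square algebra_simps)
    have "a \<le> norm k" using norm_cauchy_schwarz[of u k] nu a_def by simp
    then show "0 \<le> (norm k)^2 - a^2" using apos by (simp add: power_mono)
  qed simp_all
  also have "\<dots> = (2 * sqrt \<epsilon>)^2" using assms(1) by (simp add: power_mult_distrib)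
  finally have sq: "(norm (t *\<^sub>R k - y))^2 \<le> (2 * sqrt \<epsilon>)^2" .
  have "0 \<le> 2 * sqrt \<epsilon>" using assms(1) by simp
  then have "norm (t *\<^sub>R k - y) \<le> 2 * sqrt \<epsilon>"
    using sq power2_le_imp_le by blast
  then show ?thesis using pK by blast
qed

theorem mainTheorem4:
  fixes K :: "'a::euclidean_space set" and \<epsilon> :: real
  assumes "DIM('a) \<ge> 2"
    and "0 < \<epsilon>" and "\<epsilon> < 1"
    and "star_shaped K"
    and "(\<lambda>x. (1 - \<epsilon>) *\<^sub>R x) ` cball 0 1 \<subseteq> convex hull K"
    and "convex hull K \<subseteq> (\<lambda>x. (1 + \<epsilon>) *\<^sub>R x) ` cball 0 1"
  shows "(\<lambda>x. (1 - \<epsilon>) *\<^sub>R x) ` cball 0 1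
           \<subseteq> minkowski_sum K ((\<lambda>x. (2 * sqrt \<epsilon>) *\<^sub>R x) ` cball 0 1)"
proof
  fix y :: 'a assume "y \<in> (\<lambda>x. (1 - \<epsilon>) *\<^sub>R x) ` cball 0 1"
  then obtain x :: 'a where x: "norm x \<le> 1" "y = (1 - \<epsilon>) *\<^sub>R x" by auto
  have "norm y \<le> 1 - \<epsilon>" using x assms(3)
    by (simp add: mult_left_le)
  then obtain p where p: "p \<in> K" "norm (p - y) \<le> 2 * sqrt \<epsilon>"
    using key_point[OF assms(2-6)] by blast
  define s where "s = 2 * sqrt \<epsilon>"
  have s: "s > 0" using assms(2) by (simp add: s_def)
  define z where "z = (1 / s) *\<^sub>R (y - p)"
  have "norm z \<le> 1" using p s by (simp add: z_def s_def norm_minus_commute divide_le_eq)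
  moreover have "y - p = s *\<^sub>R z" using s by (simp add: z_def)
  ultimately have "y - p \<in> (\<lambda>x. (2 * sqrt \<epsilon>) *\<^sub>R x) ` cball 0 1"
    by (auto simp: s_def)
  then show "y \<in> minkowski_sum K ((\<lambda>x. (2 * sqrt \<epsilon>) *\<^sub>R x) ` cball 0 1)"
    unfolding minkowski_sum_def using p(1) by (intro CollectI exI[of _ p] exI[of _ "y - p"]) auto
qed

end
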